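(* Let $a,b$ be integers with $1\le a\le b$. Then there exists a tree $T$ such that $\tau(T)=a$ and $\beta_p(T)=b$.
   Context: Graphs are finite, simple, connected. Two vertices $u,v$ are twins if $N(u)\setminus\{v\}=N(v)\setminus\{u\}$; the twin number $\tau(G)$ is the maximum cardinality of an equivalence class of the twin relation. For a partition $\Pi=\{S_1,\dots,S_k\}$ of $V(G)$, $r(u|\Pi)=(d(u,S_1),\dots,d(u,S_k))$ with $d(u,S)=\min_{w\in S}d(u,w)$; $\Pi$ is locating if $r(u|\Pi)\ne r(v|\Pi)$ for all distinct $u,v$; $\beta_p(G)$ is the minimum size of a locating partition (for the one-vertex graph, $\tau=\beta_p=1$). *)

theory Defs
  imports Main "HOL-Library.Disjoint_Sets"
begin

definition simple_graph :: "'a set \<Rightarrow> ('a \<Rightarrow> 'a \<Rightarrow> bool) \<Rightarrow> bool" where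
  "simple_graph V E \<longleftrightarrow> finite V \<and> V \<noteq> {} \<and>
     (\<forall>x y. E x y \<longrightarrow> x \<in> V \<and> y \<in> V) \<and>
     (\<forall>x y. E x y \<longrightarrow> E y x) \<and> (\<forall>x. \<not> E x x)"

definition edge_rel :: "('a \<Rightarrow> 'a \<Rightarrow> bool) \<Rightarrow> ('a \<times> 'a) set" where
  "edge_rel E = {(x, y). E x y}"

definition connected_graph :: "'a set \<Rightarrow> ('a \<Rightarrow> 'a \<Rightarrow> bool) \<Rightarrow> bool" where
  "connected_graph V E \<longleftrightarrow> simple_graph V E \<and>
     (\<forall>u\<in>V. \<forall>v\<in>V. (u, v) \<in> (edge_rel E)\<^sup>*)"

definition is_cycle :: "('a \<Rightarrow> 'a \<Rightarrow> bool) \<Rightarrow> 'a list \<Rightarrow> bool" where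
  "is_cycle E xs \<longleftrightarrow> length xs \<ge> 3 \<and> distinct xs \<and>
     (\<forall>i. Suc i < length xs \<longrightarrow> E (xs ! i) (xs ! Suc i)) \<and>
     E (last xs) (hd xs)"

definition is_tree :: "'a set \<Rightarrow> ('a \<Rightarrow> 'a \<Rightarrow> bool) \<Rightarrow> bool" where
  "is_tree V E \<longleftrightarrow> connected_graph V E \<and> (\<nexists>xs. is_cycle E xs)"

definition gdist :: "('a \<Rightarrow> 'a \<Rightarrow> bool) \<Rightarrow> 'a \<Rightarrow> 'a \<Rightarrow> nat" where
  "gdist E u v = (LEAST n. (u, v) \<in> (edge_rel E) ^^ n)"

definition set_dist :: "('a \<Rightarrow> 'a \<Rightarrow> bool) \<Rightarrow> 'a \<Rightarrow> 'a set \<Rightarrow> nat" where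
  "set_dist E u S = Min ((\<lambda>w. gdist E u w) ` S)"

definition locating_partition :: "'a set \<Rightarrow> ('a \<Rightarrow> 'a \<Rightarrow> bool) \<Rightarrow> 'a set set \<Rightarrow> bool" where
  "locating_partition V E P \<longleftrightarrow> partition_on V P \<and>
     (\<forall>u\<in>V. \<forall>v\<in>V. u \<noteq> v \<longrightarrow> (\<exists>S\<in>P. set_dist E u S \<noteq> set_dist E v S))"

definition partition_dimension :: "'a set \<Rightarrow> ('a \<Rightarrow> 'a \<Rightarrow> bool) \<Rightarrow> nat" where
  "partition_dimension V E = (LEAST k. \<exists>P. locating_partition V E P \<and> card P = k)"

definition nbhd :: "('a \<Rightarrow> 'a \<Rightarrow> bool) \<Rightarrow> 'a \<Rightarrow> 'a set" where
  "nbhd E u = {w. E u w}"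

definition twins :: "('a \<Rightarrow> 'a \<Rightarrow> bool) \<Rightarrow> 'a \<Rightarrow> 'a \<Rightarrow> bool" where
  "twins E u v \<longleftrightarrow> nbhd E u - {v} = nbhd E v - {u}"

definition twin_number :: "'a set \<Rightarrow> ('a \<Rightarrow> 'a \<Rightarrow> bool) \<Rightarrow> nat" where
  "twin_number V E = Max ((\<lambda>u. card {v\<in>V. twins E u v}) ` V)"

end

theory Submission
  imports Defs "HOL-Library.Nat_Bijection"
begin


definition cz :: "nat \<Rightarrow> nat" where "cz k = 3*k+1"
definition xv :: "nat \<times> nat \<Rightarrow> nat" where "xv l = 3 * prod_encode l + 2"
definition yv :: "nat \<times> nat \<Rightarrow> nat" where "yv l = 3 * prod_encode l + 3"

lemma enc_simps[simp]:
  "cz k \<noteq> 0" "xv l \<noteq> 0" "yv l \<noteq> 0" "0 \<noteq> cz k" "0 \<noteq> xv l" "0 \<noteq> yv l"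
  "cz k \<noteq> xv l" "xv l \<noteq> cz k" "cz k \<noteq> yv l" "yv l \<noteq> cz k" "xv l \<noteq> yv l'" "yv l' \<noteq> xv l"
  "cz k = cz k' \<longleftrightarrow> k = k'" "xv l = xv l2 \<longleftrightarrow> l = l2" "yv l = yv l2 \<longleftrightarrow> l = l2"
  unfolding cz_def xv_def yv_def by (auto simp: prod_encode_eq) presburger+

lemma enc_pos[simp]: "0 < cz k" "0 < xv l" "0 < yv l"
  unfolding cz_def xv_def yv_def by auto

definition dep :: "nat \<Rightarrow> nat" where
  "dep u = (if u = 0 then 0 else if u mod 3 = 0 then 2 else 1)"

lemma m3: "(3*n+1) mod 3 = (1::nat)" "(3*n+2) mod 3 = (2::nat)" "(3*n+3) mod 3 = (0::nat)"
  "(3*n+1-1) div 3 = (n::nat)" "(3*n+2-2) div 3 = (n::nat)" "(3*n+3-3) div 3 = (n::nat)"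
  by presburger+

lemma dep_simps[simp]: "dep 0 = 0" "dep (cz k) = 1" "dep (xv l) = 1" "dep (yv l) = 2"
  unfolding dep_def cz_def xv_def yv_def using m3 by auto

definition sameleg :: "nat \<Rightarrow> nat \<Rightarrow> bool" where
  "sameleg u w \<longleftrightarrow> (\<exists>l. (u = xv l \<and> w = yv l) \<or> (u = yv l \<and> w = xv l))"

lemma sameleg_simps[simp]: "\<not> sameleg 0 w" "\<not> sameleg (cz k) w"
  "sameleg (xv l) w \<longleftrightarrow> w = yv l" "sameleg (yv l) w \<longleftrightarrow> w = xv l"
  unfolding sameleg_def by auto

definition dd :: "nat \<Rightarrow> nat \<Rightarrow> nat" where
  "dd u w = (if u = w then 0 else if sameleg u w then 1 else dep u + dep w)"

definition blk :: "nat \<Rightarrow> nat" where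
  "blk u = (if u = 0 then 0 else if u mod 3 = 1 then (u - 1) div 3
     else if u mod 3 = 2 then fst (prod_decode ((u - 2) div 3)) else snd (prod_decode ((u - 3) div 3)))"

lemma blk_simps[simp]: "blk 0 = 0" "blk (cz k) = k" "blk (xv (p,q)) = p" "blk (yv (p,q)) = q"
  unfolding blk_def cz_def xv_def yv_def using m3 by auto



locale spider = fixes a b :: nat assumes a1: "1 \<le> a" and ab: "a \<le> b" and b2: "2 \<le> b"
begin
definition L where "L = {(p,q). 1 \<le> p \<and> p < b \<and> 1 \<le> q \<and> q < b \<and> \<not>(p = q \<and> p < a)}"
definition N0 where "N0 = cz ` {..<a} \<union> xv ` L"
definition V where "V = insert 0 (N0 \<union> yv ` L)"
definition E where "E u v \<longleftrightarrow> (u = 0 \<and> v \<in> N0) \<or> (v = 0 \<and> u \<in> N0) \<or>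
   (\<exists>l\<in>L. (u = xv l \<and> v = yv l) \<or> (u = yv l \<and> v = xv l))"
lemma N0_simps[simp]: "0 \<notin> N0" "cz k \<in> N0 \<longleftrightarrow> k < a" "xv l \<in> N0 \<longleftrightarrow> l \<in> L" "yv l \<notin> N0"
  unfolding N0_def by auto
lemma V_simps[simp]: "0 \<in> V" "cz k \<in> V \<longleftrightarrow> k < a" "xv l \<in> V \<longleftrightarrow> l \<in> L" "yv l \<in> V \<longleftrightarrow> l \<in> L"
  unfolding V_def by auto
lemma E_simps[simp]: "E 0 w \<longleftrightarrow> w \<in> N0" "E (cz k) w \<longleftrightarrow> k < a \<and> w = 0"
  "E (xv l) w \<longleftrightarrow> l \<in> L \<and> (w = 0 \<or> w = yv l)" "E (yv l) w \<longleftrightarrow> l \<in> L \<and> w = xv l"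
  unfolding E_def by auto
lemma V_cases[consumes 1, case_names C Z X Y]:
  assumes "u \<in> V" "u = 0 \<Longrightarrow> P" "\<And>k. k < a \<Longrightarrow> u = cz k \<Longrightarrow> P"
    "\<And>l. l \<in> L \<Longrightarrow> u = xv l \<Longrightarrow> P" "\<And>l. l \<in> L \<Longrightarrow> u = yv l \<Longrightarrow> P"
  shows P using assms unfolding V_def N0_def by auto

lemma E_sym: "E u v \<Longrightarrow> E v u" unfolding E_def by auto

lemma E_V: "E u v \<Longrightarrow> u \<in> V \<and> v \<in> V" unfolding E_def V_def by auto

lemma finite_L: "finite L"
  by (rule finite_subset[of _ "{..<b} \<times> {..<b}"]) (auto simp: L_def)

lemma finite_V: "finite V" unfolding V_def N0_def using finite_L by auto

abbreviation R where "R \<equiv> edge_rel E"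

lemma R_iff[simp]: "(u,v) \<in> R \<longleftrightarrow> E u v" unfolding edge_rel_def by auto

lemma walk_c: "v \<in> V \<Longrightarrow> (0,v) \<in> R^^dep v \<and> (v,0) \<in> R^^dep v"
proof (induction rule: V_cases)
  case C then show ?case by simp
next
  case (Z k) then show ?case by simp
next
  case (X l) then show ?case by simp
next
  case (Y l)
  have "(0, yv l) \<in> R ^^ (1+1)" unfolding relpow_add using Y by (auto intro!: relcompI[of _ "xv l"])
  moreover have "(yv l, 0) \<in> R ^^ (1+1)" unfolding relpow_add using Y by (auto intro!: relcompI[of _ "xv l"])
  ultimately show ?case using Y by (simp add: numeral_2_eq_2)
qed

lemma walk: assumes "u \<in> V" "w \<in> V" shows "(u,w) \<in> R^^(dd u w)"
proof -
  consider "u = w" | "u \<noteq> w" "sameleg u w" | "u \<noteq> w" "\<not> sameleg u w" by blast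
  then show ?thesis
  proof cases
    case 1 then show ?thesis by (simp add: dd_def)
  next
    case 2 then obtain l where l: "(u = xv l \<and> w = yv l) \<or> (u = yv l \<and> w = xv l)"
      unfolding sameleg_def by blast
    then have "l \<in> L" using assms by auto
    have "dd u w = 1" using 2 by (simp add: dd_def)
    moreover have "E u w" using l \<open>l \<in> L\<close> by auto
    ultimately show ?thesis by simp
  next
    case 3
    have "(u,0) \<in> R^^dep u" "(0,w) \<in> R^^dep w" using walk_c assms by auto
    then have "(u,w) \<in> R^^(dep u) O R^^(dep w)" by (rule relcompI)
    then have "(u,w) \<in> R^^(dep u + dep w)" by (simp add: relpow_add)
    then show ?thesis using 3 by (simp add: dd_def)
  qed
qed

lemma tri: assumes "E u y" shows "dd u w \<le> Suc (dd y w)"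
proof -
  from assms consider (a) "u = 0" "y \<in> N0" | (b) "y = 0" "u \<in> N0" | (c) l where "l \<in> L" "u = xv l" "y = yv l"
    | (d) l where "l \<in> L" "u = yv l" "y = xv l" unfolding E_def by blast
  then show ?thesis
  proof cases
    case a then show ?thesis unfolding N0_def by (auto simp: dd_def)
  next
    case b then show ?thesis unfolding N0_def by (auto simp: dd_def)
  next
    case c then show ?thesis by (auto simp: dd_def)
  next
    case d then show ?thesis by (auto simp: dd_def)
  qed
qed

lemma walk_lower: "(u,w) \<in> R^^n \<Longrightarrow> dd u w \<le> n"
proof (induction n arbitrary: u)
  case 0 then show ?case by (simp add: dd_def)
next
  case (Suc n)
  then obtain y where y: "(u,y) \<in> R" "(y,w) \<in> R^^n" using relpow_Suc_D2[OF Suc.prems] by blast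
  have "dd y w \<le> n" using Suc.IH[OF y(2)] .
  moreover have "dd u w \<le> Suc (dd y w)" using y(1) by (intro tri) simp
  ultimately show ?case by linarith
qed
lemma gdist_eq: assumes "u \<in> V" "w \<in> V" shows "gdist E u w = dd u w"
  unfolding gdist_def
proof (rule Least_equality)
  show "(u, w) \<in> R ^^ dd u w" by (rule walk[OF assms])
  show "\<And>y. (u, w) \<in> R ^^ y \<Longrightarrow> dd u w \<le> y" by (rule walk_lower)
qed
end



lemma no_cycle:
  fixes f :: "'a \<Rightarrow> nat"
  assumes sym: "\<And>u v. E u v \<Longrightarrow> E v u"
  and step: "\<And>u v. E u v \<Longrightarrow> f v = Suc (f u) \<or> f u = Suc (f v)"
  and par: "\<And>u v w. E u v \<Longrightarrow> E u w \<Longrightarrow> f v < f u \<Longrightarrow> f w < f u \<Longrightarrow> v = w"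
  shows "\<not> is_cycle E xs"
proof
  assume cyc: "is_cycle E xs"
  define n where "n = length xs"
  have n3: "n \<ge> 3" and dist: "distinct xs"
    and adj: "\<And>i. Suc i < n \<Longrightarrow> E (xs ! i) (xs ! Suc i)" and cl: "E (last xs) (hd xs)"
    using cyc unfolding is_cycle_def n_def by auto
  have ne: "xs \<noteq> []" using n3 n_def by auto
  have last: "last xs = xs ! (n - 1)" using ne n_def by (simp add: last_conv_nth)
  have hd: "hd xs = xs ! 0" using ne by (simp add: hd_conv_nth)
  define M where "M = Max (f ` set xs)"
  have "M \<in> f ` set xs" unfolding M_def using ne by (intro Max_in) auto
  then obtain x where x: "x \<in> set xs" "f x = M" by auto
  then obtain i where i: "i < n" "xs ! i = x" unfolding n_def by (auto simp: in_set_conv_nth)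
  have maxi: "\<And>j. j < n \<Longrightarrow> f (xs ! j) \<le> f (xs ! i)"
    using i x unfolding M_def n_def by (auto intro!: Max_ge)
  define j0 where "j0 = (if i = 0 then n - 1 else i - 1)"
  define j1 where "j1 = (if i = n - 1 then 0 else i + 1)"
  have j0n: "j0 < n" and j1n: "j1 < n" and j01: "j0 \<noteq> j1"
    using i n3 unfolding j0_def j1_def by auto
  have e0: "E (xs ! i) (xs ! j0)"
  proof (cases "i = 0")
    case True then show ?thesis using cl last hd n3 unfolding j0_def by (auto intro: sym)
  next
    case False then have "Suc j0 = i" unfolding j0_def by simp
    then show ?thesis using adj[of j0] i by (auto intro: sym)
  qed
  have e1: "E (xs ! i) (xs ! j1)"
  proof (cases "i = n - 1")
    case True then show ?thesis using cl last hd n3 unfolding j1_def by auto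
  next
    case False then have "j1 = Suc i" "Suc i < n" using i unfolding j1_def by auto
    then show ?thesis using adj[of i] by auto
  qed
  have l0: "f (xs ! j0) < f (xs ! i)" using step[OF e0] maxi[OF j0n] by auto
  have l1: "f (xs ! j1) < f (xs ! i)" using step[OF e1] maxi[OF j1n] by auto
  have "xs ! j0 = xs ! j1" using par[OF e0 e1 l0 l1] .
  then have "j0 = j1" using dist j0n j1n unfolding n_def by (simp add: nth_eq_iff_index_eq)
  then show False using j01 by simp
qed

lemma blk_xy[simp]: "blk (xv l) = fst l" "blk (yv l) = snd l" by (cases l; simp)+

lemma dep0: "dep u = 0 \<longleftrightarrow> u = 0" unfolding dep_def by auto

context spider begin

lemma L_mem: "l \<in> L \<Longrightarrow> 1 \<le> fst l \<and> fst l < b \<and> 1 \<le> snd l \<and> snd l < b \<and> \<not>(fst l = snd l \<and> fst l < a)"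
  unfolding L_def by auto

lemma dep_N0: "w \<in> N0 \<Longrightarrow> dep w = 1" unfolding N0_def by auto

lemma E_irrefl: "\<not> E u u" unfolding E_def by auto

lemma is_tree: "is_tree V E"
proof -
  have sg: "simple_graph V E" unfolding simple_graph_def using finite_V E_V E_sym E_irrefl V_simps(1) by blast
  have conn: "\<forall>u\<in>V. \<forall>v\<in>V. (u, v) \<in> (edge_rel E)\<^sup>*"
    using walk relpow_imp_rtrancl by blast
  have nc: "\<nexists>xs. is_cycle E xs"
  proof (intro notI, elim exE)
    fix xs assume c: "is_cycle E xs"
    have "\<not> is_cycle E xs"
    proof (rule no_cycle[where f = dep])
      show "\<And>u v. E u v \<Longrightarrow> E v u" by (rule E_sym)
      show "\<And>u v. E u v \<Longrightarrow> dep v = Suc (dep u) \<or> dep u = Suc (dep v)"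
        unfolding E_def using dep_N0 by auto
      show "\<And>u v w. E u v \<Longrightarrow> E u w \<Longrightarrow> dep v < dep u \<Longrightarrow> dep w < dep u \<Longrightarrow> v = w"
        unfolding E_def using dep_N0 by auto
    qed
    then show False using c by simp
  qed
  show ?thesis unfolding is_tree_def connected_graph_def using sg conn nc by blast
qed

end


context spider begin

abbreviation Z where "Z \<equiv> cz ` {..<a}"

lemma nbhd_simps: "nbhd E 0 = N0" "k < a \<Longrightarrow> nbhd E (cz k) = {0}"
  "l \<in> L \<Longrightarrow> nbhd E (xv l) = {0, yv l}" "l \<in> L \<Longrightarrow> nbhd E (yv l) = {xv l}"
  unfolding nbhd_def by auto

lemma L11: "a \<le> 1 \<Longrightarrow> (1,1) \<in> L" unfolding L_def using b2 by auto

lemma N0_other: "\<exists>w\<in>N0. w \<noteq> cz k"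
proof (cases "a \<le> 1")
  case True then show ?thesis using L11 by (intro bexI[of _ "xv (1,1)"]) auto
next
  case False
  then show ?thesis by (cases "k = 0") (auto intro: bexI[of _ "cz 1"] bexI[of _ "cz 0"])
qed

lemma cz0: "cz 0 \<in> N0" using a1 by simp

lemma twins_iff: assumes "u \<in> V" "v \<in> V"
  shows "twins E u v \<longleftrightarrow> u = v \<or> (u \<in> Z \<and> v \<in> Z)"
proof
  assume "u = v \<or> (u \<in> Z \<and> v \<in> Z)"
  then show "twins E u v" unfolding twins_def using nbhd_simps by auto
next
  assume tw: "twins E u v"
  then have eq: "\<And>w. w \<in> nbhd E u - {v} \<longleftrightarrow> w \<in> nbhd E v - {u}" unfolding twins_def by auto
  show "u = v \<or> (u \<in> Z \<and> v \<in> Z)"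
  using assms(1) proof (cases rule: V_cases)
    case C
    from assms(2) show ?thesis proof (cases rule: V_cases)
      case (Z k) obtain w where "w \<in> N0" "w \<noteq> cz k" using N0_other by blast
      then show ?thesis using eq[of w] C Z nbhd_simps by auto
    next
      case (X l) then show ?thesis using eq[of "yv l"] C nbhd_simps by auto
    next
      case (Y l) then show ?thesis using eq[of "cz 0"] C nbhd_simps cz0 a1 by auto
    qed (simp add: C)
  next
    case (Z k)
    from assms(2) show ?thesis proof (cases rule: V_cases)
      case C obtain w where "w \<in> N0" "w \<noteq> cz k" using N0_other by blast
      then show ?thesis using eq[of w] C Z nbhd_simps by auto
    next
      case (X l) then show ?thesis using eq[of "yv l"] Z nbhd_simps by auto
    next
      case (Y l) then show ?thesis using eq[of "0"] Z nbhd_simps by auto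
    qed (insert Z, auto)
  next
    case (X l)
    from assms(2) show ?thesis proof (cases rule: V_cases)
      case C then show ?thesis using eq[of "yv l"] X nbhd_simps by auto
    next
      case (Z k) then show ?thesis using eq[of "yv l"] X nbhd_simps by auto
    next
      case (X l') then show ?thesis using eq[of "yv l"] \<open>u = xv l\<close> \<open>l \<in> L\<close> nbhd_simps by auto
    next
      case (Y l') then show ?thesis using eq[of "0"] X nbhd_simps by auto
    qed
  next
    case (Y l)
    from assms(2) show ?thesis proof (cases rule: V_cases)
      case C then show ?thesis using eq[of "cz 0"] Y nbhd_simps cz0 a1 by auto
    next
      case (Z k) then show ?thesis using eq[of "0"] Y nbhd_simps by auto
    next
      case (X l') then show ?thesis using eq[of "0"] Y nbhd_simps by auto
    next
      case (Y l') then show ?thesis using eq[of "xv l"] \<open>u = yv l\<close> \<open>l \<in> L\<close> nbhd_simps by auto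
    qed
  qed
qed

lemma Z_sub: "Z \<subseteq> V" by auto

lemma card_Z: "card Z = a"
  by (subst card_image) (auto simp: inj_on_def)

lemma twin_class: "u \<in> V \<Longrightarrow> card {v\<in>V. twins E u v} = (if u \<in> Z then a else 1)"
proof -
  assume u: "u \<in> V"
  have "{v\<in>V. twins E u v} = (if u \<in> Z then Z else {u})"
    using twins_iff[OF u] u Z_sub by auto
  then show ?thesis using card_Z by simp
qed

lemma twin_number: "twin_number V E = a"
  unfolding twin_number_def
proof (rule Max_eqI)
  show "finite ((\<lambda>u. card {v \<in> V. twins E u v}) ` V)" using finite_V by simp
  show "\<And>y. y \<in> (\<lambda>u. card {v \<in> V. twins E u v}) ` V \<Longrightarrow> y \<le> a" using twin_class a1 by auto
  have "card {v \<in> V. twins E (cz 0) v} = a" using twin_class[of "cz 0"] a1 by simp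
  then show "a \<in> (\<lambda>u. card {v \<in> V. twins E u v}) ` V" using a1 by (intro image_eqI[of _ _ "cz 0"]) auto
qed

end


context spider begin

lemma sd_eq: "S \<subseteq> V \<Longrightarrow> u \<in> V \<Longrightarrow> set_dist E u S = Min (dd u ` S)"
proof -
  assume a: "S \<subseteq> V" "u \<in> V"
  have "gdist E u ` S = dd u ` S" by (rule image_cong) (use a gdist_eq in auto)
  then show ?thesis unfolding set_dist_def by simp
qed

lemma dd_0: "dd u w = 0 \<longleftrightarrow> u = w"
proof (cases "u = w")
  case False
  have "dep u + dep w \<noteq> 0"
  proof
    assume "dep u + dep w = 0"
    then have "u = 0" "w = 0" using dep0 by simp_all
    then show False using False by simp
  qed
  then show ?thesis using False unfolding dd_def by simp
qed (simp add: dd_def)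

lemma E_dd: assumes "E u w" shows "dd u w = 1"
proof -
  from assms consider (a) "u = 0" "w \<in> N0" | (b) "w = 0" "u \<in> N0" | (c) l where "l \<in> L" "u = xv l" "w = yv l"
    | (d) l where "l \<in> L" "u = yv l" "w = xv l" unfolding E_def by blast
  then show ?thesis
  proof cases
    case a then show ?thesis unfolding N0_def by (auto simp: dd_def)
  next
    case b then show ?thesis unfolding N0_def by (auto simp: dd_def)
  qed (auto simp: dd_def)
qed

lemma sd0: "S \<subseteq> V \<Longrightarrow> finite S \<Longrightarrow> u \<in> S \<Longrightarrow> set_dist E u S = 0"
proof -
  assume a: "S \<subseteq> V" "finite S" "u \<in> S"
  have "Min (dd u ` S) = 0" by (rule Min_eqI) (use a in \<open>auto simp: dd_0 intro!: image_eqI[of _ _ u]\<close>)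
  then show ?thesis using sd_eq[of S u] a by auto
qed

lemma sd_pos: "S \<subseteq> V \<Longrightarrow> finite S \<Longrightarrow> S \<noteq> {} \<Longrightarrow> u \<in> V \<Longrightarrow> u \<notin> S \<Longrightarrow> set_dist E u S \<noteq> 0"
proof -
  assume a: "S \<subseteq> V" "finite S" "S \<noteq> {}" "u \<in> V" "u \<notin> S"
  have "Min (dd u ` S) \<in> dd u ` S" using a by (intro Min_in) auto
  then obtain w where "w \<in> S" "Min (dd u ` S) = dd u w" by auto
  moreover have "u \<noteq> w" using a(5) \<open>w \<in> S\<close> by auto
  ultimately show ?thesis using sd_eq[OF a(1,4)] dd_0 by simp
qed

lemma sd1: "S \<subseteq> V \<Longrightarrow> finite S \<Longrightarrow> u \<in> V \<Longrightarrow> u \<notin> S \<Longrightarrow> w \<in> S \<Longrightarrow> E u w \<Longrightarrow> set_dist E u S = 1"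
proof -
  assume a: "S \<subseteq> V" "finite S" "u \<in> V" "u \<notin> S" "w \<in> S" "E u w"
  have "Min (dd u ` S) = 1"
  proof (rule Min_eqI)
    show "finite (dd u ` S)" using a by simp
    show "\<And>y. y \<in> dd u ` S \<Longrightarrow> 1 \<le> y"
    proof -
      fix y assume "y \<in> dd u ` S"
      then obtain w' where "w' \<in> S" "y = dd u w'" by auto
      then have "y \<noteq> 0" using a(4) dd_0 by auto
      then show "1 \<le> y" by simp
    qed
    show "1 \<in> dd u ` S" using a(5,6) E_dd by (intro image_eqI[of _ _ w]) auto
  qed
  then show ?thesis using sd_eq[OF a(1,3)] by simp
qed

lemma dd_1E: "u \<in> V \<Longrightarrow> w \<in> V \<Longrightarrow> dd u w = 1 \<Longrightarrow> E u w"
proof -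
  assume a: "u \<in> V" "w \<in> V" "dd u w = 1"
  then have "u \<noteq> w" by (auto simp: dd_def)
  from a(1) show ?thesis
  proof (cases rule: V_cases)
    case C then have "u = 0" . from a(2) show ?thesis by (cases rule: V_cases) (use a(3) C in \<open>auto simp: dd_def split: if_splits\<close>)
  next
    case (Z k) from a(2) show ?thesis by (cases rule: V_cases) (use a(3) Z in \<open>auto simp: dd_def split: if_splits\<close>)
  next
    case (X l) from a(2) show ?thesis by (cases rule: V_cases) (use a(3) X in \<open>auto simp: dd_def split: if_splits\<close>)
  next
    case (Y l) from a(2) show ?thesis by (cases rule: V_cases) (use a(3) Y in \<open>auto simp: dd_def split: if_splits\<close>)
  qed
qed

lemma sd_not1: "S \<subseteq> V \<Longrightarrow> finite S \<Longrightarrow> S \<noteq> {} \<Longrightarrow> v \<in> V \<Longrightarrow> (\<forall>w\<in>S. \<not> E v w) \<Longrightarrow> set_dist E v S \<noteq> 1"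
proof -
  assume a: "S \<subseteq> V" "finite S" "S \<noteq> {}" "v \<in> V" "\<forall>w\<in>S. \<not> E v w"
  have "Min (dd v ` S) \<in> dd v ` S" using a by (intro Min_in) auto
  then obtain w where "w \<in> S" "Min (dd v ` S) = dd v w" by auto
  then show ?thesis using sd_eq[OF a(1,4)] a dd_1E by auto
qed

end


context spider begin

definition BB where "BB j = {v\<in>V. blk v = j}"
definition PP where "PP = BB ` {..<b}"
definition nb where "nb u = blk ` {w. E u w} - {blk u}"

lemma blk_lt: "v \<in> V \<Longrightarrow> blk v < b"
  by (cases rule: V_cases) (use ab b2 L_mem in auto)

lemma BB_ne: "j < b \<Longrightarrow> BB j \<noteq> {}"
proof (cases "j < a")
  case True then have "cz j \<in> BB j" unfolding BB_def by simp
  then show ?thesis by auto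
next
  case False
  assume "j < b"
  then have "(j,j) \<in> L" using False a1 unfolding L_def by auto
  then have "xv (j,j) \<in> BB j" unfolding BB_def by simp
  then show ?thesis by auto
qed

lemma BB_sub: "BB j \<subseteq> V" unfolding BB_def by auto
lemma BB_fin: "finite (BB j)" using finite_subset[OF BB_sub finite_V] .

lemma partition_PP: "partition_on V PP"
proof (rule partition_onI)
  show "\<Union> PP = V" unfolding PP_def BB_def using blk_lt by auto
  show "\<And>p q. p \<in> PP \<Longrightarrow> q \<in> PP \<Longrightarrow> p \<noteq> q \<Longrightarrow> disjnt p q"
    unfolding PP_def BB_def disjnt_def by auto
  show "{} \<notin> PP" unfolding PP_def using BB_ne by auto
qed

lemma card_PP: "card PP = b"
proof -
  have "inj_on BB {..<b}"
  proof (rule inj_onI)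
    fix i j assume "i \<in> {..<b}" "j \<in> {..<b}" "BB i = BB j"
    then obtain v where "v \<in> BB i" "v \<in> BB j" using BB_ne by blast
    then show "i = j" unfolding BB_def by auto
  qed
  then show ?thesis unfolding PP_def by (simp add: card_image)
qed

lemma nb_0: "nb 0 = blk ` N0 - {0}"
proof -
  have e: "{w. E 0 w} = N0" by auto
  show ?thesis unfolding nb_def e by simp
qed

lemma nb_z: "k < a \<Longrightarrow> nb (cz k) = {0} - {k}"
proof -
  assume "k < a"
  then have e2: "{w. E (cz k) w} = {0}" by auto
  show ?thesis unfolding nb_def e2 by simp
qed

lemma nb_x: "l \<in> L \<Longrightarrow> nb (xv l) = {0, snd l} - {fst l}"
proof -
  assume "l \<in> L"
  then have e3: "{w. E (xv l) w} = {0, yv l}" by auto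
  show ?thesis unfolding nb_def e3 by simp
qed

lemma nb_y: "l \<in> L \<Longrightarrow> nb (yv l) = {fst l} - {snd l}"
proof -
  assume "l \<in> L"
  then have e4: "{w. E (yv l) w} = {xv l}" by auto
  show ?thesis unfolding nb_def e4 by simp
qed

lemmas nb_simps = nb_0 nb_z nb_x nb_y

lemma one_nb0: "1 \<in> nb 0"
proof (cases "a \<le> 1")
  case True then have "xv (1,1) \<in> N0" using L11 by simp
  then show ?thesis unfolding nb_simps by (auto intro!: image_eqI[of _ _ "xv (1,1)"])
next
  case False then have "cz 1 \<in> N0" by simp
  then show ?thesis unfolding nb_simps by (auto intro!: image_eqI[of _ _ "cz 1"])
qed

lemma nb_diff: assumes "u \<in> V" "v \<in> V" "u \<noteq> v" "blk u = blk v" shows "nb u \<noteq> nb v"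
proof
  assume eq: "nb u = nb v"
  have W: "\<And>j. j \<in> nb u \<longleftrightarrow> j \<in> nb v" using eq by simp
  from assms(1) show False
  proof (cases rule: V_cases)
    case C
    from assms(2) show False
    proof (cases rule: V_cases)
      case C' : C then show False using C assms(3) by simp
    next
      case (Z k) then show False using C assms(4) W[of 1] one_nb0 nb_simps by auto
    next
      case (X l) then show False using C assms(4) L_mem[of l] by auto
    next
      case (Y l) then show False using C assms(4) L_mem[of l] by auto
    qed
  next
    case (Z k)
    from assms(2) show False
    proof (cases rule: V_cases)
      case C then show False using Z assms(4) W[of 1] one_nb0 nb_simps by auto
    next
      case Z' : (Z k') then show False using Z assms(3,4) by auto
    next
      case (X l) then show False using Z assms(4) W[of "snd l"] nb_simps L_mem[of l] by auto
    next
      case (Y l) then show False using Z assms(4) W[of 0] nb_simps L_mem[of l] by auto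
    qed
  next
    case (X l)
    from assms(2) show False
    proof (cases rule: V_cases)
      case C then show False using X assms(4) L_mem[of l] by auto
    next
      case (Z k) then show False using X assms(4) W[of "snd l"] nb_simps L_mem[of l] by auto
    next
      case X' : (X l')
      obtain p q where l: "l = (p,q)" by fastforce
      obtain p' q' where l': "l' = (p',q')" by fastforce
      have "p = p'" using assms(4) X X' l l' by simp
      moreover have "q \<noteq> q'" using assms(3) X X' l l' \<open>p = p'\<close> by auto
      moreover have "1 \<le> q" "1 \<le> q'" using L_mem[of l] L_mem[of l'] X X' l l' by auto
      ultimately show False using W[of q] W[of q'] nb_simps(3)[of l] nb_simps(3)[of l'] X X' l l' by auto
    next
      case (Y l') then show False using X assms(4) W[of 0] nb_simps L_mem[of l] L_mem[of l'] by auto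
    qed
  next
    case (Y l)
    from assms(2) show False
    proof (cases rule: V_cases)
      case C then show False using Y assms(4) L_mem[of l] by auto
    next
      case (Z k) then show False using Y assms(4) W[of 0] nb_simps L_mem[of l] by auto
    next
      case (X l') then show False using Y assms(4) W[of 0] nb_simps L_mem[of l] L_mem[of l'] by auto
    next
      case Y' : (Y l')
      obtain p q where l: "l = (p,q)" by fastforce
      obtain p' q' where l': "l' = (p',q')" by fastforce
      have "q = q'" using assms(4) Y Y' l l' by simp
      moreover have "p \<noteq> p'" using assms(3) Y Y' l l' \<open>q = q'\<close> by auto
      ultimately show False using W[of p] W[of p'] nb_simps(4)[of l] nb_simps(4)[of l'] Y Y' l l' by auto
    qed
  qed
qed

end


context spider begin

lemma sep_helper:
  assumes "u \<in> V" "v \<in> V" "blk u = blk v" "j \<in> nb u" "j \<notin> nb v"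
  shows "\<exists>S\<in>PP. set_dist E u S \<noteq> set_dist E v S"
proof -
  from assms(4) obtain w where w: "E u w" "blk w = j" "j \<noteq> blk u" unfolding nb_def by auto
  have wV: "w \<in> V" using E_V[OF w(1)] by simp
  have jb: "j < b" using blk_lt[OF wV] w(2) by simp
  have S: "BB j \<in> PP" unfolding PP_def using jb by simp
  have uS: "u \<notin> BB j" "v \<notin> BB j" using w(3) assms(3) unfolding BB_def by auto
  have wS: "w \<in> BB j" using wV w(2) unfolding BB_def by simp
  have "set_dist E u (BB j) = 1" by (rule sd1[OF BB_sub BB_fin assms(1) uS(1) wS w(1)])
  moreover have "\<forall>w'\<in>BB j. \<not> E v w'"
  proof (intro ballI notI)
    fix w' assume "w' \<in> BB j" "E v w'"
    then have "j \<in> nb v" using w(3) assms(3) unfolding nb_def BB_def by auto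
    then show False using assms(5) by simp
  qed
  then have "set_dist E v (BB j) \<noteq> 1" using sd_not1[OF BB_sub BB_fin BB_ne[OF jb] assms(2)] by simp
  ultimately show ?thesis using S by metis
qed

lemma locating_PP: "locating_partition V E PP"
  unfolding locating_partition_def
proof (intro conjI partition_PP ballI impI)
  fix u v assume uv: "u \<in> V" "v \<in> V" "u \<noteq> v"
  show "\<exists>S\<in>PP. set_dist E u S \<noteq> set_dist E v S"
  proof (cases "blk u = blk v")
    case False
    let ?S = "BB (blk u)"
    have S: "?S \<in> PP" unfolding PP_def using blk_lt[OF uv(1)] by simp
    have "set_dist E u ?S = 0" using uv(1) by (intro sd0[OF BB_sub BB_fin]) (simp add: BB_def)
    moreover have "set_dist E v ?S \<noteq> 0"
      using False uv by (intro sd_pos[OF BB_sub BB_fin BB_ne[OF blk_lt[OF uv(1)]]]) (auto simp: BB_def)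
    ultimately show ?thesis using S by metis
  next
    case True
    have "nb u \<noteq> nb v" using nb_diff uv True by blast
    then obtain j where "(j \<in> nb u \<and> j \<notin> nb v) \<or> (j \<in> nb v \<and> j \<notin> nb u)" by blast
    then show ?thesis
    proof
      assume "j \<in> nb u \<and> j \<notin> nb v"
      then show ?thesis using sep_helper uv True by blast
    next
      assume "j \<in> nb v \<and> j \<notin> nb u"
      then have "\<exists>S\<in>PP. set_dist E v S \<noteq> set_dist E u S" using sep_helper uv True by metis
      then show ?thesis by metis
    qed
  qed
qed

lemma card_L: "(b-1)*(b-1) + 1 \<le> card L + a"
proof -
  define D where "D = (\<lambda>p. (p,p)) ` {1..<a}"
  have sub: "{1..<b} \<times> {1..<b} \<subseteq> L \<union> D" unfolding L_def D_def by auto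
  have "(b-1)*(b-1) = card ({1..<b} \<times> {1..<b})" by (simp add: card_cartesian_product)
  also have "\<dots> \<le> card (L \<union> D)" using sub finite_L by (intro card_mono) (auto simp: D_def)
  also have "\<dots> \<le> card L + card D" by (rule card_Un_le)
  also have "card D \<le> a - 1" unfolding D_def using card_image_le[of "{1..<a}" "\<lambda>p. (p,p)"] by simp
  finally show ?thesis using a1 by linarith
qed

end


context spider begin

lemma sd_same:
  assumes S: "S \<subseteq> V" "finite S" "S \<noteq> {}" and uv: "u \<in> V" "v \<in> V"
  and c: "(u \<in> S \<and> v \<in> S) \<or> (u \<notin> S \<and> v \<notin> S \<and> (\<exists>w\<in>S. E u w) \<and> (\<exists>w\<in>S. E v w)) \<or> (\<forall>w\<in>S. dd u w = dd v w)"
  shows "set_dist E u S = set_dist E v S"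
  using c
proof (elim disjE conjE bexE)
  assume "u \<in> S" "v \<in> S" then show ?thesis using sd0[OF S(1,2)] by simp
next
  fix w w' assume "u \<notin> S" "v \<notin> S" "w \<in> S" "E u w" "w' \<in> S" "E v w'"
  then show ?thesis using sd1[OF S(1,2)] uv by metis
next
  assume "\<forall>w\<in>S. dd u w = dd v w"
  then have "dd u ` S = dd v ` S" by (intro image_cong) auto
  then show ?thesis using sd_eq[OF S(1)] uv by simp
qed

lemma lower:
  assumes loc: "locating_partition V E P" shows "b \<le> card P"
proof -
  have part: "partition_on V P" and sep: "\<And>u v. u \<in> V \<Longrightarrow> v \<in> V \<Longrightarrow> u \<noteq> v \<Longrightarrow> \<exists>S\<in>P. set_dist E u S \<noteq> set_dist E v S"
    using loc unfolding locating_partition_def by auto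
  have finP: "finite P" using finite_elements[OF finite_V part] .
  have PV: "\<And>S. S \<in> P \<Longrightarrow> S \<subseteq> V" using partition_onD1[OF part] by auto
  have Pfin: "\<And>S. S \<in> P \<Longrightarrow> finite S" using PV finite_subset finite_V by blast
  have Pne: "\<And>S. S \<in> P \<Longrightarrow> S \<noteq> {}" using partition_onD3[OF part] by auto
  have uniq: "\<And>S S' v. S \<in> P \<Longrightarrow> S' \<in> P \<Longrightarrow> v \<in> S \<Longrightarrow> v \<in> S' \<Longrightarrow> S = S'"
  proof (rule ccontr)
    fix S S' v assume a: "S \<in> P" "S' \<in> P" "v \<in> S" "v \<in> S'" "S \<noteq> S'"
    then have "disjnt S S'" using partition_onD2[OF part] unfolding pairwise_def by simp
    then show False using a(3,4) unfolding disjnt_def by auto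
  qed
  define cls where "cls v = (THE S. S \<in> P \<and> v \<in> S)" for v
  have cls: "cls v \<in> P \<and> v \<in> cls v" if vV: "v \<in> V" for v
  proof -
    obtain S where "S \<in> P" "v \<in> S" using vV partition_onD1[OF part] by auto
    then have "cls v = S" unfolding cls_def
    proof (intro the_equality)
      fix S' assume "S' \<in> P \<and> v \<in> S'"
      then show "S' = S" using uniq \<open>S \<in> P\<close> \<open>v \<in> S\<close> by metis
    qed simp
    then show ?thesis using \<open>S \<in> P\<close> \<open>v \<in> S\<close> by simp
  qed
  have cls_eq: "cls v = S" if "v \<in> V" "S \<in> P" "v \<in> S" for v S
    using cls[OF that(1)] uniq[of "cls v" S v] that by simp
  have clsP: "u \<in> S \<longleftrightarrow> v \<in> S" if "u \<in> V" "v \<in> V" "cls u = cls v" "S \<in> P" for u v S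
    using cls_eq[OF that(1) that(4)] cls_eq[OF that(2) that(4)] cls[OF that(1)] cls[OF that(2)] that(3) by auto
  have indist: "False" if "u \<in> V" "v \<in> V" "u \<noteq> v" "\<And>S. S \<in> P \<Longrightarrow> set_dist E u S = set_dist E v S" for u v
    using sep[OF that(1-3)] that(4) by blast
  define \<phi> where "\<phi> x = (case x of Inl l \<Rightarrow> (cls (xv l), cls (yv l)) | Inr k \<Rightarrow> (cls (cz k), cls (cz k)))" for x
  have inj: "inj_on \<phi> (L <+> {..<a})"
  proof (rule inj_onI)
    fix x y assume x: "x \<in> L <+> {..<a}" and y: "y \<in> L <+> {..<a}" and e: "\<phi> x = \<phi> y"
    show "x = y"
    proof (rule ccontr)
      assume ne: "x \<noteq> y"
      have case_xx: False if l: "l \<in> L" "l' \<in> L" "l \<noteq> l'" "cls (xv l) = cls (xv l')" "cls (yv l) = cls (yv l')" for l l'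
      proof (rule indist[of "xv l" "xv l'"])
        show "xv l \<in> V" "xv l' \<in> V" "xv l \<noteq> xv l'" using l by auto
        fix S assume S: "S \<in> P"
        have cx: "xv l \<in> S \<longleftrightarrow> xv l' \<in> S" using clsP[of "xv l" "xv l'" S] l S by auto
        have cy: "yv l \<in> S \<longleftrightarrow> yv l' \<in> S" using clsP[of "yv l" "yv l'" S] l S by auto
        show "set_dist E (xv l) S = set_dist E (xv l') S"
        proof (rule sd_same[OF PV[OF S] Pfin[OF S] Pne[OF S]])
          show "xv l \<in> V" "xv l' \<in> V" using l by auto
          show "(xv l \<in> S \<and> xv l' \<in> S) \<or> (xv l \<notin> S \<and> xv l' \<notin> S \<and> (\<exists>w\<in>S. E (xv l) w) \<and> (\<exists>w\<in>S. E (xv l') w))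
             \<or> (\<forall>w\<in>S. dd (xv l) w = dd (xv l') w)"
          proof (cases "xv l \<in> S")
            case True then show ?thesis using cx by simp
          next
            case False
            show ?thesis
            proof (cases "yv l \<in> S")
              case True then show ?thesis using False cx cy l by auto
            next
              case False': False
              have "\<forall>w\<in>S. dd (xv l) w = dd (xv l') w"
              proof
                fix w assume "w \<in> S"
                then have "w \<noteq> xv l" "w \<noteq> xv l'" "w \<noteq> yv l" "w \<noteq> yv l'" using False False' cx cy by auto
                then show "dd (xv l) w = dd (xv l') w" unfolding dd_def by simp
              qed
              then show ?thesis by simp
            qed
          qed
        qed
      qed
      have case_zz: False if k: "k < a" "k' < a" "k \<noteq> k'" "cls (cz k) = cls (cz k')" for k k'
      proof (rule indist[of "cz k" "cz k'"])
        show "cz k \<in> V" "cz k' \<in> V" "cz k \<noteq> cz k'" using k by auto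
        fix S assume S: "S \<in> P"
        have cx: "cz k \<in> S \<longleftrightarrow> cz k' \<in> S" using clsP[of "cz k" "cz k'" S] k S by auto
        show "set_dist E (cz k) S = set_dist E (cz k') S"
        proof (rule sd_same[OF PV[OF S] Pfin[OF S] Pne[OF S]])
          show "cz k \<in> V" "cz k' \<in> V" using k by auto
          show "(cz k \<in> S \<and> cz k' \<in> S) \<or> (cz k \<notin> S \<and> cz k' \<notin> S \<and> (\<exists>w\<in>S. E (cz k) w) \<and> (\<exists>w\<in>S. E (cz k') w))
             \<or> (\<forall>w\<in>S. dd (cz k) w = dd (cz k') w)"
          proof (cases "cz k \<in> S")
            case True then show ?thesis using cx by simp
          next
            case False
            have "\<forall>w\<in>S. dd (cz k) w = dd (cz k') w"
            proof
              fix w assume "w \<in> S"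
              then have "w \<noteq> cz k" "w \<noteq> cz k'" using False cx by auto
              then show "dd (cz k) w = dd (cz k') w" unfolding dd_def by simp
            qed
            then show ?thesis by simp
          qed
        qed
      qed
      have case_xz: False if l: "l \<in> L" "k < a" "cls (xv l) = cls (cz k)" "cls (yv l) = cls (cz k)" for l k
      proof (rule indist[of "xv l" "cz k"])
        show "xv l \<in> V" "cz k \<in> V" "xv l \<noteq> cz k" using l by auto
        fix S assume S: "S \<in> P"
        have cx: "xv l \<in> S \<longleftrightarrow> cz k \<in> S" using clsP[of "xv l" "cz k" S] l S by auto
        have cy: "yv l \<in> S \<longleftrightarrow> cz k \<in> S" using clsP[of "yv l" "cz k" S] l S by auto
        show "set_dist E (xv l) S = set_dist E (cz k) S"
        proof (rule sd_same[OF PV[OF S] Pfin[OF S] Pne[OF S]])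
          show "xv l \<in> V" "cz k \<in> V" using l by auto
          show "(xv l \<in> S \<and> cz k \<in> S) \<or> (xv l \<notin> S \<and> cz k \<notin> S \<and> (\<exists>w\<in>S. E (xv l) w) \<and> (\<exists>w\<in>S. E (cz k) w))
             \<or> (\<forall>w\<in>S. dd (xv l) w = dd (cz k) w)"
          proof (cases "cz k \<in> S")
            case True then show ?thesis using cx by simp
          next
            case False
            have "\<forall>w\<in>S. dd (xv l) w = dd (cz k) w"
            proof
              fix w assume "w \<in> S"
              then have "w \<noteq> xv l" "w \<noteq> cz k" "w \<noteq> yv l" using False cx cy by auto
              then show "dd (xv l) w = dd (cz k) w" unfolding dd_def by simp
            qed
            then show ?thesis by simp
          qed
        qed
      qed
      from x consider (A) l where "l \<in> L" "x = Inl l" | (B) k where "k < a" "x = Inr k" by blast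
      then show False
      proof cases
        case (A l)
        from y consider (A') l' where "l' \<in> L" "y = Inl l'" | (B') k where "k < a" "y = Inr k" by blast
        then show False
        proof cases
          case (A' l')
          then show False using A ne e case_xx[of l l'] by (simp add: \<phi>_def)
        next
          case (B' k)
          then show False using A e case_xz[of l k] by (simp add: \<phi>_def)
        qed
      next
        case (B k)
        from y consider (A') l where "l \<in> L" "y = Inl l" | (B') k' where "k' < a" "y = Inr k'" by blast
        then show False
        proof cases
          case (A' l)
          then show False using B e case_xz[of l k] by (auto simp add: \<phi>_def)
        next
          case (B' k')
          then show False using B ne e case_zz[of k k'] by (simp add: \<phi>_def)
        qed
      qed
    qed
  qed
  have img: "\<phi> ` (L <+> {..<a}) \<subseteq> P \<times> P"
  proof
    fix p assume "p \<in> \<phi> ` (L <+> {..<a})"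
    then obtain x where x: "x \<in> L <+> {..<a}" "p = \<phi> x" by blast
    from x(1) consider (A) l where "l \<in> L" "x = Inl l" | (B) k where "k < a" "x = Inr k" by blast
    then show "p \<in> P \<times> P"
    proof cases
      case (A l) then show ?thesis using x(2) cls[of "xv l"] cls[of "yv l"] by (simp add: \<phi>_def)
    next
      case (B k) then show ?thesis using x(2) cls[of "cz k"] by (simp add: \<phi>_def)
    qed
  qed
  have "card L + a = card (L <+> {..<a})" using finite_L by (simp add: card_Plus)
  also have "\<dots> = card (\<phi> ` (L <+> {..<a}))" using card_image[OF inj] by simp
  also have "\<dots> \<le> card (P \<times> P)" using img finP by (intro card_mono) auto
  also have "\<dots> = card P * card P" by (simp add: card_cartesian_product)
  finally have le: "(b-1)*(b-1) + 1 \<le> card P * card P" using card_L by linarith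
  show ?thesis
  proof (rule ccontr)
    assume "\<not> b \<le> card P"
    then have "card P \<le> b - 1" by simp
    then have "card P * card P \<le> (b-1)*(b-1)" by (intro mult_le_mono)
    then show False using le by simp
  qed
qed

end


context spider begin
lemma pdim: "partition_dimension V E = b"
  unfolding partition_dimension_def
proof (rule Least_equality)
  show "\<exists>P. locating_partition V E P \<and> card P = b" using locating_PP card_PP by blast
  show "\<And>y. \<exists>P. locating_partition V E P \<and> card P = y \<Longrightarrow> b \<le> y" using lower by blast
qed
end

lemma single:
  "is_tree {0::nat} (\<lambda>_ _. False) \<and> twin_number {0::nat} (\<lambda>_ _. False) = 1 \<and> partition_dimension {0::nat} (\<lambda>_ _. False) = 1"
proof (intro conjI)
  show "is_tree {0::nat} (\<lambda>_ _. False)"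
    unfolding is_tree_def connected_graph_def simple_graph_def is_cycle_def by auto
  have "{v \<in> {0::nat}. twins (\<lambda>_ _. False) 0 v} = {0}" unfolding twins_def by auto
  then show "twin_number {0::nat} (\<lambda>_ _. False) = 1" unfolding twin_number_def by simp
  have loc: "locating_partition {0::nat} (\<lambda>_ _. False) {{0}}"
    unfolding locating_partition_def by (auto intro: partition_on_space)
  show "partition_dimension {0::nat} (\<lambda>_ _. False) = 1"
    unfolding partition_dimension_def
  proof (rule Least_equality)
    show "\<exists>P. locating_partition {0::nat} (\<lambda>_ _. False) P \<and> card P = 1" using loc by (intro exI[of _ "{{0}}"]) simp
    fix y assume "\<exists>P. locating_partition {0::nat} (\<lambda>_ _. False) P \<and> card P = y"
    then obtain P where P: "partition_on {0::nat} P" "card P = y" unfolding locating_partition_def by auto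
    have "finite P" using finite_elements[OF _ P(1)] by simp
    moreover have "P \<noteq> {}" using partition_onD1[OF P(1)] by auto
    ultimately have "card P > 0" by (simp add: card_gt_0_iff)
    then show "1 \<le> y" using P(2) by simp
  qed
qed

theorem theorem8:
  fixes a b :: nat
  assumes "1 \<le> a" and "a \<le> b"
  shows "\<exists>(V :: nat set) E. is_tree V E \<and> twin_number V E = a \<and> partition_dimension V E = b"
proof (cases "b = 1")
  case True
  then have "a = 1" using assms by simp
  then show ?thesis using True single by blast
next
  case False
  then have "2 \<le> b" using assms by simp
  then interpret spider a b using assms by unfold_locales
  show ?thesis using is_tree twin_number pdim by blast
qed

end
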